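(* Let $A\in\mathbb{R}^{n\times n}$ and $b\in\mathbb{R}^n$, and suppose that $\mathcal{N}(A^\top-I)=\mathrm{span}(v)$ for some vector $v>0$, and $A-I+D$ is an $M$-matrix for every diagonal matrix $D=\mathrm{diag}(d)$ with $d\ge 0$ and $d\neq 0$. Then: (1) if $v^\top b=0$ and $A$ is symmetric, then the absolute value equation $Ax-|x|-b=0$ has a solution, but the solution is not unique; (2) if $v^\top b>0$, then the absolute value equation $Ax-|x|-b=0$ has no solution.
   Context: For $x\in\mathbb{R}^n$, $|x|=(|x_1|,\dots,|x_n|)^\top$. A matrix is a $Z$-matrix if all its off-diagonal entries are $\le 0$; a $Z$-matrix $A$ is an $M$-matrix if $A$ is nonsingular and $A^{-1}\ge 0$ (entrywise). Vector inequalities are entrywise; $v>0$ means all entries of $v$ are strictly positive. $\mathcal{N}(X)$ denotes the null space of $X$. *)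

theory Defs
  imports "HOL-Analysis.Analysis"
begin

definition vabs :: "real^'n \<Rightarrow> real^'n" where
  "vabs x = (\<chi> i. \<bar>x $ i\<bar>)"

definition diag_mat :: "real^'n \<Rightarrow> real^'n^'n" where
  "diag_mat d = (\<chi> i j. if i = j then d $ i else 0)"

definition null_space :: "real^'n^'n \<Rightarrow> (real^'n) set" where
  "null_space X = {x. X *v x = 0}"

definition Z_matrix :: "real^'n^'n \<Rightarrow> bool" where
  "Z_matrix A \<longleftrightarrow> (\<forall>i j. i \<noteq> j \<longrightarrow> A $ i $ j \<le> 0)"

definition M_matrix :: "real^'n^'n \<Rightarrow> bool" where
  "M_matrix A \<longleftrightarrow> Z_matrix A \<and> invertible A \<and> (\<forall>i j. matrix_inv A $ i $ j \<ge> 0)"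

end

theory Submission
  imports Defs
begin

lemma transpose_B: "transpose (A - mat 1) = transpose A - (mat 1 :: real^'n^'n)"
  by (simp add: transpose_def mat_def vec_eq_iff)

lemma Bmul: "(A - mat 1) *v x = A *v x - (x::real^'n)"
  by (simp add: matrix_vector_mult_diff_rdistrib)

theorem corollary3p1:
  fixes A :: "real^'n^'n" and b v :: "real^'n"
  assumes null: "null_space (transpose A - mat 1) = span {v}"
    and vpos: "\<forall>i. v $ i > 0"
    and M: "\<And>d. (\<forall>i. d $ i \<ge> 0) \<Longrightarrow> d \<noteq> 0 \<Longrightarrow> M_matrix (A - mat 1 + diag_mat d)"
  shows "(v \<bullet> b = 0 \<and> transpose A = A \<longrightarrow>
           (\<exists>x. A *v x - vabs x - b = 0) \<and>
           (\<exists>x y. x \<noteq> y \<and> A *v x - vabs x - b = 0 \<and> A *v y - vabs y - b = 0))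
       \<and> (v \<bullet> b > 0 \<longrightarrow> \<not> (\<exists>x. A *v x - vabs x - b = 0))"
proof -
  have vnull: "(transpose A - mat 1) *v v = 0"
    using null span_base[of v "{v}"] by (auto simp: null_space_def)
  then have Atv: "transpose A *v v = v"
    by (simp add: Bmul[of "transpose A"])
  have vnz: "v \<noteq> 0" using vpos by (metis less_irrefl zero_index)
  have P2: "\<not> (\<exists>x. A *v x - vabs x - b = 0)" if "v \<bullet> b > 0"
  proof
    assume "\<exists>x. A *v x - vabs x - b = 0"
    then obtain x where x: "b = A *v x - vabs x" by (metis diff_eq_eq add_0)
    have "v \<bullet> (A *v x) = v \<bullet> x"
      by (metis Atv dot_lmul_matrix transpose_matrix_vector)
    then have "v \<bullet> b = v \<bullet> (x - vabs x)" using x by (simp add: inner_diff_right)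
    also have "\<dots> = (\<Sum>i\<in>UNIV. v$i * (x$i - \<bar>x$i\<bar>))"
      by (simp add: inner_vec_def vabs_def)
    also have "\<dots> \<le> 0"
      by (intro sum_nonpos) (metis vpos abs_ge_self diff_le_0_iff_le less_le mult_nonneg_nonpos)
    finally show False using that by simp
  qed
  have P1: "(\<exists>x. A *v x - vabs x - b = 0) \<and>
           (\<exists>x y. x \<noteq> y \<and> A *v x - vabs x - b = 0 \<and> A *v y - vabs y - b = 0)"
    if vb: "v \<bullet> b = 0" and sym: "transpose A = A"
  proof -
    define f where "f = (\<lambda>x. (A - mat 1) *v x)"
    have lin: "linear f" unfolding f_def by (simp add: matrix_vector_mul_linear)
    have adj: "adjoint f = f"
      unfolding f_def adjoint_matrix transpose_B sym ..
    have "f -` {0} = (range f)\<^sup>\<bottom>"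
      using ker_orthogonal_comp_adjoint[OF lin] adj by simp
    then have "range f = (f -` {0})\<^sup>\<bottom>"
      using orthogonal_comp_self[of "range f"] lin linear_subspace_image subspace_UNIV by metis
    also have "f -` {0} = span {v}"
      using null sym unfolding f_def null_space_def transpose_B by auto
    finally have rf: "range f = (span {v})\<^sup>\<bottom>" .
    have "b \<in> (span {v})\<^sup>\<bottom>"
      using vb by (auto simp: orthogonal_comp_def orthogonal_def span_singleton inner_commute)
    with rf obtain x0 where x0: "f x0 = b" by (metis imageE)
    have fv: "f v = 0"
      using vnull sym unfolding f_def transpose_B by simp
    define t where "t = (\<Sum>i\<in>UNIV. \<bar>x0$i\<bar> / v$i)"
    have sol: "A *v (x0 + s *\<^sub>R v) - vabs (x0 + s *\<^sub>R v) - b = 0" if st: "s \<ge> t" for s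
    proof -
      have nn: "(x0 + s *\<^sub>R v) $ i \<ge> 0" for i
      proof -
        have vi: "v$i > 0" using vpos by auto
        have "\<bar>x0$i\<bar> / v$i \<le> t"
          unfolding t_def by (rule member_le_sum) (use vpos in \<open>auto intro: divide_nonneg_pos\<close>)
        then have "\<bar>x0$i\<bar> / v$i \<le> s" using st by linarith
        then have "\<bar>x0$i\<bar> \<le> s * v$i" using vi by (simp add: divide_le_eq)
        then show ?thesis by simp
      qed
      have va: "vabs (x0 + s *\<^sub>R v) = x0 + s *\<^sub>R v"
        using nn by (simp add: vabs_def vec_eq_iff)
      have "f (x0 + s *\<^sub>R v) = b"
        using x0 fv lin by (simp add: linear_add linear_scale)
      then show ?thesis unfolding va f_def Bmul by simp
    qed
    have "x0 + t *\<^sub>R v \<noteq> x0 + (t+1) *\<^sub>R v"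
      using vnz by (simp add: algebra_simps)
    moreover have "A *v (x0 + t *\<^sub>R v) - vabs (x0 + t *\<^sub>R v) - b = 0" using sol[of t] by simp
    moreover have "A *v (x0 + (t+1) *\<^sub>R v) - vabs (x0 + (t+1) *\<^sub>R v) - b = 0" using sol[of "t+1"] by simp
    ultimately show ?thesis by blast
  qed
  show ?thesis using P1 P2 by blast
qed

end
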